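(* Let $X$ be a finite set, $t_1<\dots<t_M$ real numbers and $(\mathcal{P}^{t_m})_{m\le M}$ partitions of $X$, with continuous-indexed Multiscale Clustering Filtration $(K^t)_{t\ge t_1}$ and clique complex filtration $(L^t)_{t\ge t_1}$ of the Cluster Assignment Graph, and let $K:=K^{t_M}$. If the sequence is strictly hierarchical, i.e. $\mathcal{P}^{t_1}\le\dots\le\mathcal{P}^{t_M}$, then $H_k^p(L^t)\cong H_k^p(K^t)$ for all integers $0\le k\le\dim(K)-1$, all $t\ge t_1$ and all $p\ge0$.
   Context: A partition of $X$ is a collection of non-empty pairwise disjoint subsets (clusters) whose union is $X$; $\mathcal{P}\le\mathcal{Q}$ means every cluster of $\mathcal{P}$ lies in a cluster of $\mathcal{Q}$. For a finite non-empty set $C$, $\Delta C$ is the set of all non-empty subsets of $C$. The MCF is $K^{t_m}:=\bigcup_{l\le m}\bigcup_{C\in\mathcal{P}^{t_l}}\Delta C$, and for $t\ge t_1$, $K^t:=K^{t_m}$ where $m$ is the largest index with $t_m\le t$. For $t\ge t_1$ let $G_t$ be the graph on $X$ in which distinct $x,y$ are adjacent iff there is $m$ with $t_m\le t$ such that $x,y$ lie in the same cluster of $\mathcal{P}^{t_m}$; $L^t$ is the clique complex of $G_t$. $\dim(K)$ is the maximal dimension of a simplex in $K$. Homology is simplicial homology over $\mathbb{Z}_2$, and for a filtration $(F^t)$, $H_k^p(F^t)$ is the image of $H_k(F^t)\to H_k(F^{t+p})$ induced by inclusion. *)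

theory Defs
  imports Complex_Main "HOL-Library.Disjoint_Sets" "HOL-Algebra.Coset"
begin

definition simplices :: "'a set set \<Rightarrow> nat \<Rightarrow> 'a set set" where
  "simplices K k = {s \<in> K. card s = Suc k}"

definition chain_group :: "'a set set \<Rightarrow> nat \<Rightarrow> 'a set set monoid" where
  "chain_group K k = \<lparr>carrier = Pow (simplices K k), mult = (\<lambda>a b. (a - b) \<union> (b - a)), one = {}\<rparr>"

definition boundary :: "nat \<Rightarrow> 'a set set \<Rightarrow> 'a set set" where
  "boundary k c = (if k = 0 then {} else {f. card f = k \<and> odd (card {s \<in> c. f \<subseteq> s})})"

definition cycles :: "'a set set \<Rightarrow> nat \<Rightarrow> 'a set set set" where
  "cycles K k = {c \<in> Pow (simplices K k). boundary k c = {}}"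

definition boundaries :: "'a set set \<Rightarrow> nat \<Rightarrow> 'a set set set" where
  "boundaries K k = boundary (Suc k) ` Pow (simplices K (Suc k))"

text \<open>Persistent homology H_k^p(F^t): the image of H_k(F^t) \<rightarrow> H_k(F^(t+p)) induced by inclusion,
  realised as the subgroup of H_k(F^(t+p)) = Z_k/B_k consisting of the classes of cycles of F^t.\<close>
definition pers_hom :: "(real \<Rightarrow> 'a set set) \<Rightarrow> nat \<Rightarrow> real \<Rightarrow> real \<Rightarrow> 'a set set set monoid" where
  "pers_hom F k t p =
     (chain_group (F (t + p)) k Mod boundaries (F (t + p)) k)
       \<lparr>carrier := (\<lambda>z. r_coset (chain_group (F (t + p)) k) (boundaries (F (t + p)) k) z) ` cycles (F t) k\<rparr>"

definition refines :: "'a set set \<Rightarrow> 'a set set \<Rightarrow> bool" where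
  "refines P Q \<longleftrightarrow> (\<forall>C\<in>P. \<exists>D\<in>Q. C \<subseteq> D)"

definition Delta :: "'a set \<Rightarrow> 'a set set" where
  "Delta C = {s. s \<noteq> {} \<and> s \<subseteq> C}"

text \<open>K^(t_m) for the index m (partitions indexed 1..M, P m = P^(t_m)).\<close>
definition MCF_idx :: "(nat \<Rightarrow> 'a set set) \<Rightarrow> nat \<Rightarrow> 'a set set" where
  "MCF_idx P m = (\<Union>l\<in>{1..m}. \<Union>C\<in>P l. Delta C)"

definition MCF :: "(nat \<Rightarrow> real) \<Rightarrow> (nat \<Rightarrow> 'a set set) \<Rightarrow> nat \<Rightarrow> real \<Rightarrow> 'a set set" where
  "MCF tm P M t = MCF_idx P (GREATEST m. m \<in> {1..M} \<and> tm m \<le> t)"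

definition CAG_adj :: "(nat \<Rightarrow> real) \<Rightarrow> (nat \<Rightarrow> 'a set set) \<Rightarrow> nat \<Rightarrow> real \<Rightarrow> 'a \<Rightarrow> 'a \<Rightarrow> bool" where
  "CAG_adj tm P M t x y \<longleftrightarrow> x \<noteq> y \<and> (\<exists>m\<in>{1..M}. tm m \<le> t \<and> (\<exists>C\<in>P m. x \<in> C \<and> y \<in> C))"

definition CAG_clique :: "'a set \<Rightarrow> (nat \<Rightarrow> real) \<Rightarrow> (nat \<Rightarrow> 'a set set) \<Rightarrow> nat \<Rightarrow> real \<Rightarrow> 'a set set" where
  "CAG_clique X tm P M t =
     {s. s \<noteq> {} \<and> finite s \<and> s \<subseteq> X \<and> (\<forall>x\<in>s. \<forall>y\<in>s. x \<noteq> y \<longrightarrow> CAG_adj tm P M t x y)}"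

definition cdim :: "'a set set \<Rightarrow> int" where
  "cdim K = int (Max (card ` K)) - 1"

end

theory Submission
  imports Defs
begin

lemma refines_trans: "refines A B \<Longrightarrow> refines B C \<Longrightarrow> refines A C"
  unfolding refines_def by (meson order_trans)

lemma refines_chain:
  assumes "\<forall>m. 1 \<le> m \<longrightarrow> m < M \<longrightarrow> refines (P m) (P (Suc m))"
    and "1 \<le> l" "l \<le> g" "g \<le> M"
  shows "refines (P l) (P g)"
  using assms(3,4)
proof (induction g rule: dec_induct)
  case base
  then show ?case unfolding refines_def by blast
next
  case (step n)
  then have "refines (P n) (P (Suc n))" using assms(1,2) by auto
  then show ?case using step refines_trans by auto
qed

lemma main_eq:
  fixes X :: "'a set" and M :: nat and tm :: "nat \<Rightarrow> real" and P :: "nat \<Rightarrow> 'a set set"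
  assumes fin: "finite X"
    and M1: "1 \<le> M"
    and mono: "\<forall>i j. 1 \<le> i \<longrightarrow> i < j \<longrightarrow> j \<le> M \<longrightarrow> tm i < tm j"
    and part: "\<forall>m\<in>{1..M}. partition_on X (P m)"
    and ref: "\<forall>m. 1 \<le> m \<longrightarrow> m < M \<longrightarrow> refines (P m) (P (Suc m))"
    and t: "tm 1 \<le> t"
  shows "CAG_clique X tm P M t = MCF tm P M t"
proof -
  define Q where "Q = (\<lambda>m. m \<in> {1..M} \<and> tm m \<le> t)"
  define g where "g = (GREATEST m. Q m)"
  have Q1: "Q 1" using M1 t by (simp add: Q_def)
  have bnd: "\<And>y. Q y \<Longrightarrow> y \<le> M" by (simp add: Q_def)
  have Qg: "Q g" unfolding g_def using GreatestI_nat[of Q 1 M] Q1 bnd by blast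
  have leg: "\<And>l. Q l \<Longrightarrow> l \<le> g" unfolding g_def using Greatest_le_nat[of Q _ M] bnd by blast
  have g1: "1 \<le> g" "g \<le> M" "tm g \<le> t" using Qg by (auto simp: Q_def)
  have Qiff: "Q l \<longleftrightarrow> 1 \<le> l \<and> l \<le> g" for l
  proof
    assume "Q l" then show "1 \<le> l \<and> l \<le> g" using leg by (auto simp: Q_def)
  next
    assume a: "1 \<le> l \<and> l \<le> g"
    have "tm l \<le> tm g"
    proof (cases "l = g")
      case False
      then have "l < g" using a by simp
      then have "tm l < tm g" using mono[rule_format, of l g] a g1(2) by simp
      then show ?thesis by simp
    qed simp
    then show "Q l" using a g1 by (simp add: Q_def)
  qed
  have pg: "partition_on X (P g)" using part g1 by simp
  have MCFeq: "MCF tm P M t = {s. s \<noteq> {} \<and> (\<exists>D\<in>P g. s \<subseteq> D)}"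
  proof -
    have "MCF tm P M t = MCF_idx P g" unfolding MCF_def g_def Q_def by simp
    also have "\<dots> = {s. s \<noteq> {} \<and> (\<exists>D\<in>P g. s \<subseteq> D)}"
    proof (intro Set.set_eqI iffI)
      fix s assume "s \<in> MCF_idx P g"
      then obtain l C where l: "l \<in> {1..g}" "C \<in> P l" "s \<in> Delta C"
        unfolding MCF_idx_def by blast
      have "refines (P l) (P g)" using refines_chain[OF ref] l g1 by auto
      then obtain D where "D \<in> P g" "C \<subseteq> D" using l unfolding refines_def by blast
      then show "s \<in> {s. s \<noteq> {} \<and> (\<exists>D\<in>P g. s \<subseteq> D)}" using l unfolding Delta_def by blast
    next
      fix s assume "s \<in> {s. s \<noteq> {} \<and> (\<exists>D\<in>P g. s \<subseteq> D)}"
      then obtain D where "s \<noteq> {}" "D \<in> P g" "s \<subseteq> D" by blast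
      moreover have "g \<in> {1..g}" using g1 by simp
      ultimately show "s \<in> MCF_idx P g" unfolding MCF_idx_def Delta_def by blast
    qed
    finally show ?thesis .
  qed
  have adj: "CAG_adj tm P M t x y \<longleftrightarrow> x \<noteq> y \<and> (\<exists>D\<in>P g. x \<in> D \<and> y \<in> D)" for x y
  proof
    assume "CAG_adj tm P M t x y"
    then obtain l C where l: "x \<noteq> y" "l \<in> {1..M}" "tm l \<le> t" "C \<in> P l" "x \<in> C" "y \<in> C"
      unfolding CAG_adj_def by blast
    then have "Q l" by (simp add: Q_def)
    then have "1 \<le> l" "l \<le> g" using Qiff by auto
    then have "refines (P l) (P g)" using refines_chain[OF ref] g1 by auto
    then obtain D where "D \<in> P g" "C \<subseteq> D" using l(4) unfolding refines_def by blast
    then show "x \<noteq> y \<and> (\<exists>D\<in>P g. x \<in> D \<and> y \<in> D)" using l(1,5,6) by blast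
  next
    assume "x \<noteq> y \<and> (\<exists>D\<in>P g. x \<in> D \<and> y \<in> D)"
    then show "CAG_adj tm P M t x y" unfolding CAG_adj_def using g1 by auto
  qed
  have sub: "\<And>D. D \<in> P g \<Longrightarrow> D \<subseteq> X" using pg unfolding partition_on_def by auto
  have disj: "\<And>D E. D \<in> P g \<Longrightarrow> E \<in> P g \<Longrightarrow> D \<noteq> E \<Longrightarrow> D \<inter> E = {}"
    using pg unfolding partition_on_def by (meson disjointD)
  have cov: "\<And>x. x \<in> X \<Longrightarrow> \<exists>D\<in>P g. x \<in> D" using pg unfolding partition_on_def by auto
  show ?thesis
  proof (intro Set.set_eqI iffI)
    fix s assume s: "s \<in> CAG_clique X tm P M t"
    then have s1: "s \<noteq> {}" "s \<subseteq> X" and pw: "\<forall>x\<in>s. \<forall>y\<in>s. x \<noteq> y \<longrightarrow> (\<exists>D\<in>P g. x \<in> D \<and> y \<in> D)"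
      unfolding CAG_clique_def using adj by auto
    obtain x0 where x0: "x0 \<in> s" using s1 by auto
    obtain D where D: "D \<in> P g" "x0 \<in> D" using cov x0 s1 by auto
    have "s \<subseteq> D"
    proof
      fix y assume y: "y \<in> s"
      show "y \<in> D"
      proof (cases "y = x0")
        case False
        have "\<exists>E\<in>P g. x0 \<in> E \<and> y \<in> E" using pw x0 y False by blast
        then obtain E where E: "E \<in> P g" "x0 \<in> E" "y \<in> E" by blast
        have "E = D"
        proof (rule ccontr)
          assume "E \<noteq> D"
          then have "E \<inter> D = {}" using disj E D by blast
          then show False using E D by blast
        qed
        then show ?thesis using E by simp
      qed (use D in simp)
    qed
    then show "s \<in> MCF tm P M t" using MCFeq s1 D by auto
  next
    fix s assume "s \<in> MCF tm P M t"
    then obtain D where D: "s \<noteq> {}" "D \<in> P g" "s \<subseteq> D" using MCFeq by auto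
    then have "s \<subseteq> X" using sub by blast
    moreover then have "finite s" using fin finite_subset by blast
    moreover have "\<forall>x\<in>s. \<forall>y\<in>s. x \<noteq> y \<longrightarrow> CAG_adj tm P M t x y"
    proof (intro ballI impI)
      fix x y assume "x \<in> s" "y \<in> s" "x \<noteq> y"
      then show "CAG_adj tm P M t x y" unfolding adj using D by blast
    qed
    ultimately show "s \<in> CAG_clique X tm P M t"
      unfolding CAG_clique_def mem_Collect_eq using D(1) by blast
  qed
qed

theorem corollary2:
  fixes X :: "'a set" and M :: nat and tm :: "nat \<Rightarrow> real" and P :: "nat \<Rightarrow> 'a set set"
    and k :: nat and t p :: real
  assumes "finite X"
    and "1 \<le> M"
    and "\<forall>i j. 1 \<le> i \<longrightarrow> i < j \<longrightarrow> j \<le> M \<longrightarrow> tm i < tm j"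
    and "\<forall>m\<in>{1..M}. partition_on X (P m)"
    and "\<forall>m. 1 \<le> m \<longrightarrow> m < M \<longrightarrow> refines (P m) (P (Suc m))"
    and "int k \<le> cdim (MCF tm P M (tm M)) - 1"
    and "tm 1 \<le> t"
    and "0 \<le> p"
  shows "pers_hom (CAG_clique X tm P M) k t p \<cong> pers_hom (MCF tm P M) k t p"
proof -
  have e1: "CAG_clique X tm P M t = MCF tm P M t"
    by (rule main_eq[OF assms(1-5) assms(7)])
  have e2: "CAG_clique X tm P M (t + p) = MCF tm P M (t + p)"
    by (rule main_eq[OF assms(1-5)]) (use assms(7,8) in simp)
  have "pers_hom (CAG_clique X tm P M) k t p = pers_hom (MCF tm P M) k t p"
    unfolding pers_hom_def e1 e2 ..
  moreover have "pers_hom (MCF tm P M) k t p \<cong> pers_hom (MCF tm P M) k t p"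
    by (rule iso_refl)
  ultimately show ?thesis by simp
qed

end
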